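(* Let $R$ and $S$ be commutative rings with identity, $f:R\to S$ a ring homomorphism, and $J$ a nonzero proper ideal of $S$. Let $\mathfrak{p}$ and $\{\mathfrak{p}_\alpha\}_{\alpha\in\Lambda}$ be prime ideals of $R$, and $\mathfrak{q}$ and $\{\mathfrak{q}_\alpha\}_{\alpha\in\Lambda}$ be prime ideals of $S$ not containing $J$. Then: (1) $\mathfrak{p}^{\prime_f}\subseteq\bigcup_{\alpha\in\Lambda}\mathfrak{p}_\alpha^{\prime_f}$ if and only if $\mathfrak{p}\subseteq\bigcup_{\alpha\in\Lambda}\mathfrak{p}_\alpha$. (2) If $\mathfrak{q}\subseteq\bigcup_{\alpha\in\Lambda}\mathfrak{q}_\alpha$, then $\overline{\mathfrak{q}}^f\subseteq\bigcup_{\alpha\in\Lambda}\overline{\mathfrak{q}_\alpha}^f$. The converse holds if either $f$ is surjective or $\operatorname{Spec}(S)\setminus V(J)$ is compactly packed. (3) $\bigcup_{\alpha\in\Lambda}\mathfrak{p}_\alpha^{\prime_f}\subseteq\mathfrak{p}^{\prime_f}$ if and only if $\bigcup_{\alpha\in\Lambda}\mathfrak{p}_\alpha\subseteq\mathfrak{p}$; and $\bigcup_{\alpha\in\Lambda}\overline{\mathfrak{q}_\alpha}^f\subseteq\overline{\mathfrak{q}}^f$ if and only if $\bigcup_{\alpha\in\Lambda}\mathfrak{q}_\alpha\subseteq\mathfrak{q}$ (with no additional assumptions). (4) $\overline{\mathfrak{q}}^f\subseteq\bigcup_{\alpha\in\Lambda}\mathfrak{p}_\alpha^{\prime_f}$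 if and only if $f^{-1}(\mathfrak{q}+J)\subseteq\bigcup_{\alpha\in\Lambda}\mathfrak{p}_\alpha$. (5) If $\operatorname{Spec}(S)\setminus V(J)$ is compactly packed, then $\mathfrak{p}^{\prime_f}\not\subseteq\bigcup_{\alpha\in\Lambda}\overline{\mathfrak{q}_\alpha}^f$.
   Context: $R\bowtie^f J:=\{(r,f(r)+j)\mid r\in R,\ j\in J\}$, a subring of $R\times S$. For a prime ideal $\mathfrak{p}$ of $R$, $\mathfrak{p}^{\prime_f}:=\{(p,f(p)+j)\mid p\in\mathfrak{p},\ j\in J\}$; for a prime ideal $\mathfrak{q}$ of $S$ with $J\not\subseteq\mathfrak{q}$, $\overline{\mathfrak{q}}^f:=\{(r,f(r)+j)\mid r\in R,\ j\in J,\ f(r)+j\in\mathfrak{q}\}$; both are prime ideals of $R\bowtie^f J$. $V(J)$ is the set of prime ideals of $S$ containing $J$. A subset $X\subseteq\operatorname{Spec}(S)$ is compactly packed if whenever an ideal $I$ of $S$ is contained in the union of a family $\{\mathfrak{q}_i\}_i$ of elements of $X$, then $I\subseteq\mathfrak{q}_i$ for some $i$. *)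

theory Defs
  imports "HOL-Algebra.Algebra"
begin

text \<open>Amalgamated duplication primes. The ring R bowtie^f J is viewed as a subset of
  carrier R \<times> carrier S; only set-theoretic inclusions are needed.\<close>

definition prime_prime_f ::
  "('a, 'm) ring_scheme \<Rightarrow> ('b, 'n) ring_scheme \<Rightarrow> ('a \<Rightarrow> 'b) \<Rightarrow> 'b set \<Rightarrow> 'a set \<Rightarrow> ('a \<times> 'b) set"
  where "prime_prime_f R S f J p = {(a, f a \<oplus>\<^bsub>S\<^esub> j) | a j. a \<in> p \<and> j \<in> J}"

definition prime_bar_f ::
  "('a, 'm) ring_scheme \<Rightarrow> ('b, 'n) ring_scheme \<Rightarrow> ('a \<Rightarrow> 'b) \<Rightarrow> 'b set \<Rightarrow> 'b set \<Rightarrow> ('a \<times> 'b) set"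
  where "prime_bar_f R S f J q =
    {(r, f r \<oplus>\<^bsub>S\<^esub> j) | r j. r \<in> carrier R \<and> j \<in> J \<and> f r \<oplus>\<^bsub>S\<^esub> j \<in> q}"

definition spec_minus_V :: "('b, 'n) ring_scheme \<Rightarrow> 'b set \<Rightarrow> 'b set set"
  where "spec_minus_V S J = {q. primeideal q S \<and> \<not> J \<subseteq> q}"

definition compactly_packed :: "('b, 'n) ring_scheme \<Rightarrow> 'b set set \<Rightarrow> bool"
  where "compactly_packed S Xs \<longleftrightarrow>
    (\<forall>I0 Fam. ideal I0 S \<longrightarrow> Fam \<subseteq> Xs \<longrightarrow> I0 \<subseteq> \<Union>Fam \<longrightarrow> (\<exists>q\<in>Fam. I0 \<subseteq> q))"

end

theory Submission
  imports Defs
begin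

theorem lemma2p2:
  fixes R :: "('a, 'm) ring_scheme" and S :: "('b, 'n) ring_scheme"
    and f :: "'a \<Rightarrow> 'b" and J :: "'b set"
    and \<Lambda> :: "'i set" and p :: "'a set" and P :: "'i \<Rightarrow> 'a set"
    and q :: "'b set" and Q :: "'i \<Rightarrow> 'b set"
  assumes "cring R" and "cring S" and "f \<in> ring_hom R S"
    and "ideal J S" and "J \<noteq> {\<zero>\<^bsub>S\<^esub>}" and "J \<noteq> carrier S"
    and "primeideal p R" and "\<And>\<alpha>. \<alpha> \<in> \<Lambda> \<Longrightarrow> primeideal (P \<alpha>) R"
    and "primeideal q S" and "\<not> J \<subseteq> q"
    and "\<And>\<alpha>. \<alpha> \<in> \<Lambda> \<Longrightarrow> primeideal (Q \<alpha>) S"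
    and "\<And>\<alpha>. \<alpha> \<in> \<Lambda> \<Longrightarrow> \<not> J \<subseteq> Q \<alpha>"
  shows
    "(prime_prime_f R S f J p \<subseteq> (\<Union>\<alpha>\<in>\<Lambda>. prime_prime_f R S f J (P \<alpha>))
        \<longleftrightarrow> p \<subseteq> (\<Union>\<alpha>\<in>\<Lambda>. P \<alpha>))
     \<and> (q \<subseteq> (\<Union>\<alpha>\<in>\<Lambda>. Q \<alpha>) \<longrightarrow>
          prime_bar_f R S f J q \<subseteq> (\<Union>\<alpha>\<in>\<Lambda>. prime_bar_f R S f J (Q \<alpha>)))
     \<and> ((f ` carrier R = carrier S \<or> compactly_packed S (spec_minus_V S J)) \<longrightarrow>
          prime_bar_f R S f J q \<subseteq> (\<Union>\<alpha>\<in>\<Lambda>. prime_bar_f R S f J (Q \<alpha>)) \<longrightarrow>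
          q \<subseteq> (\<Union>\<alpha>\<in>\<Lambda>. Q \<alpha>))
     \<and> ((\<Union>\<alpha>\<in>\<Lambda>. prime_prime_f R S f J (P \<alpha>)) \<subseteq> prime_prime_f R S f J p
        \<longleftrightarrow> (\<Union>\<alpha>\<in>\<Lambda>. P \<alpha>) \<subseteq> p)
     \<and> ((\<Union>\<alpha>\<in>\<Lambda>. prime_bar_f R S f J (Q \<alpha>)) \<subseteq> prime_bar_f R S f J q
        \<longleftrightarrow> (\<Union>\<alpha>\<in>\<Lambda>. Q \<alpha>) \<subseteq> q)
     \<and> (prime_bar_f R S f J q \<subseteq> (\<Union>\<alpha>\<in>\<Lambda>. prime_prime_f R S f J (P \<alpha>))
        \<longleftrightarrow> {r \<in> carrier R. f r \<in> q <+>\<^bsub>S\<^esub> J} \<subseteq> (\<Union>\<alpha>\<in>\<Lambda>. P \<alpha>))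
     \<and> (compactly_packed S (spec_minus_V S J) \<longrightarrow>
          \<not> prime_prime_f R S f J p \<subseteq> (\<Union>\<alpha>\<in>\<Lambda>. prime_bar_f R S f J (Q \<alpha>)))"
proof -
  interpret R: cring R by fact
  interpret S: cring S by fact
  interpret J: ideal J S by fact
  interpret p: primeideal p R by fact
  interpret q: primeideal q S by fact
  have hom: "f \<in> ring_hom R S" by fact
  have fc: "\<And>r. r \<in> carrier R \<Longrightarrow> f r \<in> carrier S" using ring_hom_closed[OF hom] by blast
  have f0: "f \<zero>\<^bsub>R\<^esub> = \<zero>\<^bsub>S\<^esub>" using ring_hom_zero[OF hom] R.ring_axioms S.ring_axioms by blast
  have Jc: "J \<subseteq> carrier S" using J.Icarr by blast
  have fr0: "\<And>r. r \<in> carrier R \<Longrightarrow> f r \<oplus>\<^bsub>S\<^esub> \<zero>\<^bsub>S\<^esub> = f r" using fc by simp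
  have PP: "\<And>a b j. (a, b) \<in> prime_prime_f R S f J p' \<Longrightarrow> a \<in> p'" for p'
    unfolding prime_prime_f_def by blast
  have z0: "\<zero>\<^bsub>S\<^esub> \<in> J" by simp
  have PPI: "\<And>a. a \<in> p' \<Longrightarrow> p' \<subseteq> carrier R \<Longrightarrow> (a, f a) \<in> prime_prime_f R S f J p'" for p'
  proof -
    fix a assume "a \<in> p'" "p' \<subseteq> carrier R"
    have "(a, f a \<oplus>\<^bsub>S\<^esub> \<zero>\<^bsub>S\<^esub>) \<in> prime_prime_f R S f J p'"
      unfolding prime_prime_f_def using \<open>a \<in> p'\<close> z0 by blast
    then show "(a, f a) \<in> prime_prime_f R S f J p'"
      using fr0[of a] \<open>a \<in> p'\<close> \<open>p' \<subseteq> carrier R\<close> by auto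
  qed
  have Pc: "\<And>\<alpha>. \<alpha> \<in> \<Lambda> \<Longrightarrow> P \<alpha> \<subseteq> carrier R"
    using ideal.Icarr[OF primeideal.axioms(1)[OF assms(8)]] by blast
  have Qc: "\<And>\<alpha>. \<alpha> \<in> \<Lambda> \<Longrightarrow> Q \<alpha> \<subseteq> carrier S"
    using ideal.Icarr[OF primeideal.axioms(1)[OF assms(11)]] by blast
  have pc: "p \<subseteq> carrier R" using p.Icarr by blast
  have qc: "q \<subseteq> carrier S" using q.Icarr by blast
  have QP: "\<And>\<alpha>. \<alpha> \<in> \<Lambda> \<Longrightarrow> primeideal (Q \<alpha>) S" by fact
  have Jsub: "additive_subgroup J S" using ideal.axioms(1)[OF J.is_ideal] .
  have Jinv: "\<And>j. j \<in> J \<Longrightarrow> \<ominus>\<^bsub>S\<^esub> j \<in> J" using additive_subgroup.a_inv_closed[OF Jsub] by blast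
  have p0: "\<zero>\<^bsub>R\<^esub> \<in> p" using additive_subgroup.zero_closed[OF ideal.axioms(1)[OF p.is_ideal]] .
  have BarI: "\<And>r j. r \<in> carrier R \<Longrightarrow> j \<in> J \<Longrightarrow> f r \<oplus>\<^bsub>S\<^esub> j \<in> q' \<Longrightarrow> (r, f r \<oplus>\<^bsub>S\<^esub> j) \<in> prime_bar_f R S f J q'" for q'
    unfolding prime_bar_f_def by blast
  have BarD: "\<And>r x. (r, x) \<in> prime_bar_f R S f J q' \<Longrightarrow> x \<in> q' \<and> r \<in> carrier R" for q'
    unfolding prime_bar_f_def by blast
  have bar_f: "\<And>r. r \<in> carrier R \<Longrightarrow> f r \<in> q' \<Longrightarrow> (r, f r) \<in> prime_bar_f R S f J q'" for q'
    using BarI[OF _ z0] fr0 by simp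
  have bar_j: "\<And>j. j \<in> J \<Longrightarrow> j \<in> q' \<Longrightarrow> (\<zero>\<^bsub>R\<^esub>, j) \<in> prime_bar_f R S f J q'" for q'
  proof -
    fix j assume "j \<in> J" "j \<in> q'"
    moreover have "f \<zero>\<^bsub>R\<^esub> \<oplus>\<^bsub>S\<^esub> j = j" using f0 Jc \<open>j \<in> J\<close> by auto
    ultimately show "(\<zero>\<^bsub>R\<^esub>, j) \<in> prime_bar_f R S f J q'" using BarI[of "\<zero>\<^bsub>R\<^esub>" j q'] by simp
  qed
  show ?thesis
  proof (intro conjI impI)
    show "prime_prime_f R S f J p \<subseteq> (\<Union>\<alpha>\<in>\<Lambda>. prime_prime_f R S f J (P \<alpha>)) \<longleftrightarrow> p \<subseteq> (\<Union>\<alpha>\<in>\<Lambda>. P \<alpha>)"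
    proof
      assume H: "prime_prime_f R S f J p \<subseteq> (\<Union>\<alpha>\<in>\<Lambda>. prime_prime_f R S f J (P \<alpha>))"
      show "p \<subseteq> (\<Union>\<alpha>\<in>\<Lambda>. P \<alpha>)"
      proof
        fix a assume "a \<in> p"
        then have "(a, f a) \<in> prime_prime_f R S f J p" using PPI pc by blast
        then show "a \<in> (\<Union>\<alpha>\<in>\<Lambda>. P \<alpha>)" using H PP by blast
      qed
    next
      assume H: "p \<subseteq> (\<Union>\<alpha>\<in>\<Lambda>. P \<alpha>)"
      then show "prime_prime_f R S f J p \<subseteq> (\<Union>\<alpha>\<in>\<Lambda>. prime_prime_f R S f J (P \<alpha>))"
        unfolding prime_prime_f_def by blast
    qed
  next
    assume H: "q \<subseteq> (\<Union>\<alpha>\<in>\<Lambda>. Q \<alpha>)"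
    then show "prime_bar_f R S f J q \<subseteq> (\<Union>\<alpha>\<in>\<Lambda>. prime_bar_f R S f J (Q \<alpha>))"
      unfolding prime_bar_f_def by blast
  next
    assume C: "f ` carrier R = carrier S \<or> compactly_packed S (spec_minus_V S J)"
      and H: "prime_bar_f R S f J q \<subseteq> (\<Union>\<alpha>\<in>\<Lambda>. prime_bar_f R S f J (Q \<alpha>))"
    show "q \<subseteq> (\<Union>\<alpha>\<in>\<Lambda>. Q \<alpha>)"
    proof (cases "f ` carrier R = carrier S")
      case True
      show ?thesis
      proof
        fix x assume x: "x \<in> q"
        with qc True obtain r where r: "r \<in> carrier R" "x = f r" by blast
        then have "(r, f r) \<in> prime_bar_f R S f J q" using bar_f[of r q] x by blast
        then obtain \<alpha> where a: "\<alpha> \<in> \<Lambda>" "(r, f r) \<in> prime_bar_f R S f J (Q \<alpha>)" using H by blast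
        have "f r \<in> Q \<alpha>" using BarD[OF a(2)] by blast
        then show "x \<in> (\<Union>\<alpha>\<in>\<Lambda>. Q \<alpha>)" using a(1) r(2) by blast
      qed
    next
      case False
      with C have cp: "compactly_packed S (spec_minus_V S J)" by blast
      have qJ: "q \<inter> J \<subseteq> (\<Union>\<alpha>\<in>\<Lambda>. Q \<alpha>)"
      proof
        fix x assume x: "x \<in> q \<inter> J"
        then have "(\<zero>\<^bsub>R\<^esub>, x) \<in> prime_bar_f R S f J q" using bar_j[of x q] by blast
        then obtain \<alpha> where a: "\<alpha> \<in> \<Lambda>" "(\<zero>\<^bsub>R\<^esub>, x) \<in> prime_bar_f R S f J (Q \<alpha>)" using H by blast
        have "x \<in> Q \<alpha>" using BarD[OF a(2)] by blast
        then show "x \<in> (\<Union>\<alpha>\<in>\<Lambda>. Q \<alpha>)" using a(1) by blast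
      qed
      have I: "ideal (q \<inter> J) S" using S.i_intersect[OF q.is_ideal J.is_ideal] .
      have F: "Q ` \<Lambda> \<subseteq> spec_minus_V S J"
        unfolding spec_minus_V_def using assms(11,12) by blast
      have qJU: "q \<inter> J \<subseteq> \<Union>(Q ` \<Lambda>)" using qJ by simp
      have "\<exists>qq\<in>Q ` \<Lambda>. q \<inter> J \<subseteq> qq"
        using cp[unfolded compactly_packed_def, rule_format, OF I F qJU] .
      then obtain \<alpha> where a: "\<alpha> \<in> \<Lambda>" "q \<inter> J \<subseteq> Q \<alpha>" by blast
      obtain j where j: "j \<in> J" "j \<notin> Q \<alpha>" using assms(12)[OF a(1)] by blast
      have jc: "j \<in> carrier S" using j(1) Jc by blast
      show ?thesis
      proof
        fix x assume x: "x \<in> q"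
        have xc: "x \<in> carrier S" using x qc by blast
        have "x \<otimes>\<^bsub>S\<^esub> j \<in> q" using q.I_r_closed[OF x jc] .
        moreover have "x \<otimes>\<^bsub>S\<^esub> j \<in> J" using J.I_l_closed[OF j(1) xc] .
        ultimately have "x \<otimes>\<^bsub>S\<^esub> j \<in> Q \<alpha>" using a(2) by blast
        then have "x \<in> Q \<alpha> \<or> j \<in> Q \<alpha>" using primeideal.I_prime[OF QP[OF a(1)] xc jc] by blast
        then show "x \<in> (\<Union>\<alpha>\<in>\<Lambda>. Q \<alpha>)" using a(1) j(2) by blast
      qed
    qed
  next
    show "(\<Union>\<alpha>\<in>\<Lambda>. prime_prime_f R S f J (P \<alpha>)) \<subseteq> prime_prime_f R S f J p \<longleftrightarrow> (\<Union>\<alpha>\<in>\<Lambda>. P \<alpha>) \<subseteq> p"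
    proof
      assume H: "(\<Union>\<alpha>\<in>\<Lambda>. prime_prime_f R S f J (P \<alpha>)) \<subseteq> prime_prime_f R S f J p"
      show "(\<Union>\<alpha>\<in>\<Lambda>. P \<alpha>) \<subseteq> p"
      proof
        fix a assume "a \<in> (\<Union>\<alpha>\<in>\<Lambda>. P \<alpha>)"
        then obtain \<alpha> where "\<alpha> \<in> \<Lambda>" "a \<in> P \<alpha>" by blast
        then have "(a, f a) \<in> prime_prime_f R S f J (P \<alpha>)" using PPI Pc by blast
        then show "a \<in> p" using H PP \<open>\<alpha> \<in> \<Lambda>\<close> by blast
      qed
    next
      assume H: "(\<Union>\<alpha>\<in>\<Lambda>. P \<alpha>) \<subseteq> p"
      then show "(\<Union>\<alpha>\<in>\<Lambda>. prime_prime_f R S f J (P \<alpha>)) \<subseteq> prime_prime_f R S f J p"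
        unfolding prime_prime_f_def by blast
    qed
  next
    show "(\<Union>\<alpha>\<in>\<Lambda>. prime_bar_f R S f J (Q \<alpha>)) \<subseteq> prime_bar_f R S f J q \<longleftrightarrow> (\<Union>\<alpha>\<in>\<Lambda>. Q \<alpha>) \<subseteq> q"
    proof
      assume H: "(\<Union>\<alpha>\<in>\<Lambda>. prime_bar_f R S f J (Q \<alpha>)) \<subseteq> prime_bar_f R S f J q"
      show "(\<Union>\<alpha>\<in>\<Lambda>. Q \<alpha>) \<subseteq> q"
      proof
        fix x assume "x \<in> (\<Union>\<alpha>\<in>\<Lambda>. Q \<alpha>)"
        then obtain \<alpha> where a: "\<alpha> \<in> \<Lambda>" "x \<in> Q \<alpha>" by blast
        have xc: "x \<in> carrier S" using a Qc by blast
        obtain j where j: "j \<in> J" "j \<notin> q" using assms(10) by blast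
        have jc: "j \<in> carrier S" using j Jc by blast
        have "x \<otimes>\<^bsub>S\<^esub> j \<in> Q \<alpha>" using ideal.I_r_closed[OF primeideal.axioms(1)[OF QP[OF a(1)]]] a xc jc by blast
        moreover have "x \<otimes>\<^bsub>S\<^esub> j \<in> J" using J.I_l_closed xc j by blast
        ultimately have "(\<zero>\<^bsub>R\<^esub>, x \<otimes>\<^bsub>S\<^esub> j) \<in> prime_bar_f R S f J (Q \<alpha>)" using bar_j by blast
        then have "x \<otimes>\<^bsub>S\<^esub> j \<in> q" using H a BarD by blast
        then show "x \<in> q" using q.I_prime xc jc j by blast
      qed
    next
      assume H: "(\<Union>\<alpha>\<in>\<Lambda>. Q \<alpha>) \<subseteq> q"
      then show "(\<Union>\<alpha>\<in>\<Lambda>. prime_bar_f R S f J (Q \<alpha>)) \<subseteq> prime_bar_f R S f J q"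
        unfolding prime_bar_f_def by blast
    qed
  next
    show "prime_bar_f R S f J q \<subseteq> (\<Union>\<alpha>\<in>\<Lambda>. prime_prime_f R S f J (P \<alpha>))
        \<longleftrightarrow> {r \<in> carrier R. f r \<in> q <+>\<^bsub>S\<^esub> J} \<subseteq> (\<Union>\<alpha>\<in>\<Lambda>. P \<alpha>)"
    proof
      assume H: "prime_bar_f R S f J q \<subseteq> (\<Union>\<alpha>\<in>\<Lambda>. prime_prime_f R S f J (P \<alpha>))"
      show "{r \<in> carrier R. f r \<in> q <+>\<^bsub>S\<^esub> J} \<subseteq> (\<Union>\<alpha>\<in>\<Lambda>. P \<alpha>)"
      proof
        fix r assume "r \<in> {r \<in> carrier R. f r \<in> q <+>\<^bsub>S\<^esub> J}"
        then obtain a j where r: "r \<in> carrier R" "a \<in> q" "j \<in> J" "f r = a \<oplus>\<^bsub>S\<^esub> j"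
          unfolding set_add_def' by blast
        have ac: "a \<in> carrier S" using r qc by blast
        have jc: "j \<in> carrier S" using r Jc by blast
        have e: "f r \<oplus>\<^bsub>S\<^esub> (\<ominus>\<^bsub>S\<^esub> j) = a" using r(4) ac jc
          by (simp add: S.a_assoc S.r_neg)
        have "(r, f r \<oplus>\<^bsub>S\<^esub> (\<ominus>\<^bsub>S\<^esub> j)) \<in> prime_bar_f R S f J q"
          using BarI[OF r(1) Jinv[OF r(3)], of q] e r(2) by simp
        then obtain \<alpha> where a: "\<alpha> \<in> \<Lambda>" "(r, f r \<oplus>\<^bsub>S\<^esub> (\<ominus>\<^bsub>S\<^esub> j)) \<in> prime_prime_f R S f J (P \<alpha>)" using H by blast
        have "r \<in> P \<alpha>" using PP[OF a(2)] .
        then show "r \<in> (\<Union>\<alpha>\<in>\<Lambda>. P \<alpha>)" using a(1) by blast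
      qed
    next
      assume H: "{r \<in> carrier R. f r \<in> q <+>\<^bsub>S\<^esub> J} \<subseteq> (\<Union>\<alpha>\<in>\<Lambda>. P \<alpha>)"
      show "prime_bar_f R S f J q \<subseteq> (\<Union>\<alpha>\<in>\<Lambda>. prime_prime_f R S f J (P \<alpha>))"
      proof
        fix z assume "z \<in> prime_bar_f R S f J q"
        then obtain r j where z: "z = (r, f r \<oplus>\<^bsub>S\<^esub> j)" "r \<in> carrier R" "j \<in> J" "f r \<oplus>\<^bsub>S\<^esub> j \<in> q"
          unfolding prime_bar_f_def by blast
        have jc: "j \<in> carrier S" using z Jc by blast
        have frc: "f r \<in> carrier S" using z fc by blast
        have "f r = (f r \<oplus>\<^bsub>S\<^esub> j) \<oplus>\<^bsub>S\<^esub> (\<ominus>\<^bsub>S\<^esub> j)" using jc frc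
          by (simp add: S.a_assoc S.r_neg)
        moreover have "\<ominus>\<^bsub>S\<^esub> j \<in> J" using Jinv[OF z(3)] .
        ultimately have "f r \<in> (\<Union>h\<in>q. \<Union>k\<in>J. {h \<oplus>\<^bsub>S\<^esub> k})" using z(4) by blast
        then have "f r \<in> q <+>\<^bsub>S\<^esub> J" unfolding set_add_def' .
        then obtain \<alpha> where a: "\<alpha> \<in> \<Lambda>" "r \<in> P \<alpha>" using H z(2) by blast
        then show "z \<in> (\<Union>\<alpha>\<in>\<Lambda>. prime_prime_f R S f J (P \<alpha>))"
          using z unfolding prime_prime_f_def by blast
      qed
    qed
  next
    assume cp: "compactly_packed S (spec_minus_V S J)"
    show "\<not> prime_prime_f R S f J p \<subseteq> (\<Union>\<alpha>\<in>\<Lambda>. prime_bar_f R S f J (Q \<alpha>))"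
    proof
      assume H: "prime_prime_f R S f J p \<subseteq> (\<Union>\<alpha>\<in>\<Lambda>. prime_bar_f R S f J (Q \<alpha>))"
      have "J \<subseteq> (\<Union>\<alpha>\<in>\<Lambda>. Q \<alpha>)"
      proof
        fix j assume j: "j \<in> J"
        have "(\<zero>\<^bsub>R\<^esub>, f \<zero>\<^bsub>R\<^esub> \<oplus>\<^bsub>S\<^esub> j) \<in> prime_prime_f R S f J p"
          unfolding prime_prime_f_def using j p0 by blast
        moreover have "f \<zero>\<^bsub>R\<^esub> \<oplus>\<^bsub>S\<^esub> j = j" using f0 j Jc by auto
        ultimately have "(\<zero>\<^bsub>R\<^esub>, j) \<in> prime_prime_f R S f J p" by simp
        then obtain \<alpha> where a: "\<alpha> \<in> \<Lambda>" "(\<zero>\<^bsub>R\<^esub>, j) \<in> prime_bar_f R S f J (Q \<alpha>)" using H by blast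
        have "j \<in> Q \<alpha>" using BarD[OF a(2)] by blast
        then show "j \<in> (\<Union>\<alpha>\<in>\<Lambda>. Q \<alpha>)" using a(1) by blast
      qed
      then have JU: "J \<subseteq> \<Union>(Q ` \<Lambda>)" by simp
      have F: "Q ` \<Lambda> \<subseteq> spec_minus_V S J"
        unfolding spec_minus_V_def using assms(11,12) by blast
      have "\<exists>qq\<in>Q ` \<Lambda>. J \<subseteq> qq"
        using cp[unfolded compactly_packed_def, rule_format, OF J.is_ideal F JU] .
      then obtain \<alpha> where "\<alpha> \<in> \<Lambda>" "J \<subseteq> Q \<alpha>" by blast
      then show False using assms(12) by blast
    qed
  qed
qed

end
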